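(* Consider $\min f(x)$ s.t. $g(x)\in K$ with $f,g$ twice continuously differentiable and $K\subseteq\mathbb{R}^m$ closed; $C:=g^{-1}(K)$. Let $d\in T_C(\bar x)$ and $\bar x$ be a local optimal solution in direction $d$ with $\nabla f(\bar x)d=0$. Then for every $\lambda\in\mathbb{R}^m$ with $\nabla_xL(\bar x,\lambda)=0$: (i) $\sigma_\Theta(\lambda)\le0$; (ii) $\nabla_{xx}^2L(\bar x,\lambda)(d,d)-\sigma_\Omega(\lambda)=\alpha\ge0$, where $\alpha:=\inf_{w\in T_C^2(\bar x;d)}\big(\nabla f(\bar x)w+\nabla^2f(\bar x)(d,d)\big)$.
   Context: $L(x,\lambda):=f(x)+\langle\lambda,g(x)\rangle$. $\Theta:=\nabla g(\bar x)\big(T_C^{''}(\bar x;d)\big)$ and $\Omega:=\nabla g(\bar x)\big(T_C^2(\bar x;d)\big)+\nabla^2g(\bar x)(d,d)$, where $\nabla^2g(\bar x)(d,d):=(d^T\nabla^2g_i(\bar x)d)_{i=1}^m$. $T_C^2(\bar x;d):=\{w\mid \exists t_k\downarrow 0,\ w_k\to w,\ \bar x+t_kd+\tfrac12 t_k^2w_k\in C\}$; $T_C^{''}(\bar x;d):=\{w\mid \exists (t_k,r_k)\downarrow(0,0),\ w_k\to w,\ t_k/r_k\to0,\ \bar x+t_kd+\tfrac12 t_kr_kw_k\in C\}$. $\sigma_S(\lambda):=\sup_{u\in S}\langle\lambda,u\rangle$, with $\sigma_\emptyset\equiv-\infty$ and $\inf\emptyset=+\infty$. $V_{\rho,\delta}(d):=\{w\in\delta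 B_{\mathbb{R}^n}\mid \|\,\|d\|w-\|w\|d\,\|\le\rho\|w\|\|d\|\}$; $\bar x\in C$ is local optimal in direction $d$ if for some $\rho,\delta>0$, $f(x)\ge f(\bar x)$ for all $x\in C\cap(\bar x+V_{\rho,\delta}(d))$. *)

theory Defs
  imports "HOL-Analysis.Analysis"
begin

definition tangent_cone :: "'a::real_normed_vector set \<Rightarrow> 'a \<Rightarrow> 'a set" where
  "tangent_cone C x = {d. \<exists>(t::nat \<Rightarrow> real) dk.
      (\<forall>k. t k > 0) \<and> t \<longlonglongrightarrow> 0 \<and> dk \<longlonglongrightarrow> d \<and> (\<forall>k. x + t k *\<^sub>R dk k \<in> C)}"

definition second_tangent_set :: "'a::real_normed_vector set \<Rightarrow> 'a \<Rightarrow> 'a \<Rightarrow> 'a set" where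
  "second_tangent_set C x d = {w. \<exists>(t::nat \<Rightarrow> real) wk.
      (\<forall>k. t k > 0) \<and> t \<longlonglongrightarrow> 0 \<and> wk \<longlonglongrightarrow> w \<and>
      (\<forall>k. x + t k *\<^sub>R d + ((1/2) * (t k)^2) *\<^sub>R wk k \<in> C)}"

definition asymptotic_second_tangent_cone :: "'a::real_normed_vector set \<Rightarrow> 'a \<Rightarrow> 'a \<Rightarrow> 'a set" where
  "asymptotic_second_tangent_cone C x d = {w. \<exists>(t::nat \<Rightarrow> real) (r::nat \<Rightarrow> real) wk.
      (\<forall>k. t k > 0 \<and> r k > 0) \<and> t \<longlonglongrightarrow> 0 \<and> r \<longlonglongrightarrow> 0 \<and> (\<lambda>k. t k / r k) \<longlonglongrightarrow> 0 \<and>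
      wk \<longlonglongrightarrow> w \<and> (\<forall>k. x + t k *\<^sub>R d + ((1/2) * t k * r k) *\<^sub>R wk k \<in> C)}"

text \<open>Support function with values in extended reals (sigma of the empty set is -infinity).\<close>
definition support_fun :: "'a::real_inner set \<Rightarrow> 'a \<Rightarrow> ereal" where
  "support_fun S l = (SUP u\<in>S. ereal (l \<bullet> u))"

definition dir_nbhd :: "real \<Rightarrow> real \<Rightarrow> 'a::real_normed_vector \<Rightarrow> 'a set" where
  "dir_nbhd \<rho> \<delta> d = {w. w \<in> cball 0 \<delta> \<and>
      norm (norm d *\<^sub>R w - norm w *\<^sub>R d) \<le> \<rho> * norm w * norm d}"

definition local_opt_in_dir :: "('a::real_normed_vector \<Rightarrow> real) \<Rightarrow> 'a set \<Rightarrow> 'a \<Rightarrow> 'a \<Rightarrow> bool" where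
  "local_opt_in_dir f C x d \<longleftrightarrow> x \<in> C \<and>
     (\<exists>\<rho>>0. \<exists>\<delta>>0. \<forall>y \<in> C \<inter> ((\<lambda>w. x + w) ` dir_nbhd \<rho> \<delta> d). f y \<ge> f x)"

end

theory Submission
  imports Defs
begin

lemma phi1:
  fixes f :: "'a::real_normed_vector \<Rightarrow> real"
  assumes f_D: "\<And>x. (f has_derivative blinfun_apply (Df x)) (at x)"
  shows "((\<lambda>s. f (x + s *\<^sub>R h)) has_real_derivative Df (x + s *\<^sub>R h) h) (at s)"
proof -
  have l: "((\<lambda>s. x + s *\<^sub>R h) has_derivative (\<lambda>u. u *\<^sub>R h)) (at s)"
    by (auto intro!: derivative_eq_intros)
  have "((\<lambda>s. f (x + s *\<^sub>R h)) has_derivative (\<lambda>u. Df (x + s *\<^sub>R h) (u *\<^sub>R h))) (at s)"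
    using has_derivative_compose[OF l f_D] by simp
  then show ?thesis unfolding has_field_derivative_def
    by (rule has_derivative_eq_rhs) (simp_all add: fun_eq_iff blinfun.scaleR_right mult.commute)
qed

lemma phi2:
  fixes Df :: "'a::real_normed_vector \<Rightarrow> ('a \<Rightarrow>\<^sub>L real)"
  assumes f_D2: "\<And>x. (Df has_derivative blinfun_apply (D2f x)) (at x)"
  shows "((\<lambda>s. Df (x + s *\<^sub>R h) h) has_real_derivative D2f (x + s *\<^sub>R h) h h) (at s)"
proof -
  have l: "((\<lambda>s. x + s *\<^sub>R h) has_derivative (\<lambda>u. u *\<^sub>R h)) (at s)"
    by (auto intro!: derivative_eq_intros)
  have "((\<lambda>s. Df (x + s *\<^sub>R h)) has_derivative (\<lambda>u. D2f (x + s *\<^sub>R h) (u *\<^sub>R h))) (at s)"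
    using has_derivative_compose[OF l f_D2] by simp
  then have "((\<lambda>s. blinfun_apply (Df (x + s *\<^sub>R h)) h) has_derivative (\<lambda>u. D2f (x + s *\<^sub>R h) (u *\<^sub>R h) h)) (at s)"
    by (auto intro!: derivative_eq_intros)
  then show ?thesis unfolding has_field_derivative_def
    by (rule has_derivative_eq_rhs) (simp_all add: fun_eq_iff blinfun.scaleR_right blinfun.scaleR_left mult.commute)
qed

lemma taylor_rem:
  fixes f :: "'a::real_normed_vector \<Rightarrow> real"
  assumes f_D: "\<And>x. (f has_derivative blinfun_apply (Df x)) (at x)"
    and f_D2: "\<And>x. (Df has_derivative blinfun_apply (D2f x)) (at x)"
  shows "\<exists>t. 0 < t \<and> t < 1 \<and> f (x + h) = f x + Df x h + D2f (x + t *\<^sub>R h) h h / 2"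
proof -
  define diff where "diff = (\<lambda>m::nat. if m = 0 then (\<lambda>s. f (x + s *\<^sub>R h))
     else if m = 1 then (\<lambda>s. Df (x + s *\<^sub>R h) h) else (\<lambda>s. D2f (x + s *\<^sub>R h) h h))"
  have "\<forall>m t. m < 2 \<and> 0 \<le> t \<and> t \<le> 1 \<longrightarrow> DERIV (diff m) t :> diff (Suc m) t"
  proof (intro allI impI)
    fix m t assume "m < (2::nat) \<and> 0 \<le> t \<and> t \<le> (1::real)"
    then have "m = 0 \<or> m = 1" by auto
    then show "DERIV (diff m) t :> diff (Suc m) t"
      using phi1[OF f_D] phi2[OF f_D2] by (auto simp: diff_def)
  qed
  from Taylor[of 2 diff "\<lambda>s. f (x + s *\<^sub>R h)" 0 1 0 1, OF _ _ this]
  obtain t where "0 < t \<and> t < 1" "f (x + 1 *\<^sub>R h) = (\<Sum>m<2. diff m 0 / fact m * (1 - 0) ^ m) + diff 2 t / fact 2 * (1 - 0) ^ 2"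
    by (auto simp: diff_def)
  then show ?thesis
    by (intro exI[of _ t]) (simp add: diff_def numeral_2_eq_2)
qed

lemma taylor_small:
  fixes f :: "'a::real_normed_vector \<Rightarrow> real"
  assumes f_D: "\<And>x. (f has_derivative blinfun_apply (Df x)) (at x)"
    and f_D2: "\<And>x. (Df has_derivative blinfun_apply (D2f x)) (at x)"
    and cont: "isCont D2f x" and e: "e > 0"
  shows "\<exists>\<delta>>0. \<forall>h. norm h < \<delta> \<longrightarrow> \<bar>f (x + h) - f x - Df x h - D2f x h h / 2\<bar> \<le> e * (norm h)^2"
proof -
  obtain \<delta> where d: "\<delta> > 0" "\<And>y. dist y x < \<delta> \<Longrightarrow> dist (D2f y) (D2f x) < 2 * e"
    using cont e unfolding continuous_at_eps_delta by (metis mult_pos_pos zero_less_numeral)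
  show ?thesis
  proof (intro exI[of _ \<delta>] conjI allI impI d(1))
    fix h :: 'a assume h: "norm h < \<delta>"
    obtain t where t: "0 < t" "t < 1" "f (x + h) = f x + Df x h + D2f (x + t *\<^sub>R h) h h / 2"
      using taylor_rem[OF f_D f_D2] by blast
    have "t * norm h \<le> norm h" using t by (simp add: mult_left_le_one_le)
    then have "dist (x + t *\<^sub>R h) x < \<delta>" using t h by (simp add: dist_norm)
    then have n: "norm (D2f (x + t *\<^sub>R h) - D2f x) \<le> 2 * e"
      using d(2) by (simp add: dist_norm less_imp_le)
    have "f (x + h) - f x - Df x h - D2f x h h / 2 = (D2f (x + t *\<^sub>R h) - D2f x) h h / 2"
      using t(3) by (simp add: blinfun.diff_left)
    also have "\<bar>\<dots>\<bar> \<le> norm (D2f (x + t *\<^sub>R h) - D2f x) * norm h * norm h / 2"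
    proof -
      have "norm ((D2f (x + t *\<^sub>R h) - D2f x) h h) \<le> norm ((D2f (x + t *\<^sub>R h) - D2f x) h) * norm h"
        by (rule norm_blinfun)
      also have "\<dots> \<le> norm (D2f (x + t *\<^sub>R h) - D2f x) * norm h * norm h"
        by (intro mult_right_mono norm_blinfun) auto
      finally show ?thesis by simp
    qed
    also have "\<dots> \<le> 2 * e * norm h * norm h / 2"
      using n by (intro divide_right_mono mult_right_mono) auto
    finally show "\<bar>f (x + h) - f x - Df x h - D2f x h h / 2\<bar> \<le> e * (norm h)^2"
      by (simp add: power2_eq_square)
  qed
qed

lemma rem_seq:
  fixes f :: "'a::real_normed_vector \<Rightarrow> real"
  assumes f_D: "\<And>x. (f has_derivative blinfun_apply (Df x)) (at x)"
    and f_D2: "\<And>x. (Df has_derivative blinfun_apply (D2f x)) (at x)"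
    and cont: "isCont D2f x"
    and spos: "\<And>k. s k > 0" and s0: "s \<longlonglongrightarrow> 0" and vlim: "v \<longlonglongrightarrow> v0"
  shows "(\<lambda>k. (f (x + s k *\<^sub>R v k) - f x - Df x (s k *\<^sub>R v k)
            - D2f x (s k *\<^sub>R v k) (s k *\<^sub>R v k) / 2) / (s k)^2) \<longlonglongrightarrow> 0"
proof (rule tendstoI)
  fix e :: real assume e: "e > 0"
  define B where "B = norm v0 + 1"
  have B: "B > 0" unfolding B_def by (smt (verit) norm_ge_zero)
  have ev1: "eventually (\<lambda>k. norm (v k) < B) sequentially"
    using tendsto_norm[OF vlim] by (rule order_tendstoD) (simp add: B_def)
  have e2: "e / (2 * B^2) > 0" using e B by simp
  obtain \<delta> where d: "\<delta> > 0" "\<And>h. norm h < \<delta> \<Longrightarrow> \<bar>f (x + h) - f x - Df x h - D2f x h h / 2\<bar> \<le> e / (2 * B^2) * (norm h)^2"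
    using taylor_small[OF f_D f_D2 cont e2] by blast
  have ev2: "eventually (\<lambda>k. s k < \<delta> / B) sequentially"
    using s0 by (rule order_tendstoD) (simp add: d B)
  show "eventually (\<lambda>k. dist ((f (x + s k *\<^sub>R v k) - f x - Df x (s k *\<^sub>R v k)
            - D2f x (s k *\<^sub>R v k) (s k *\<^sub>R v k) / 2) / (s k)^2) 0 < e) sequentially"
    using ev1 ev2
  proof eventually_elim
    case (elim k)
    have sk: "s k > 0" by (rule spos)
    have "norm (s k *\<^sub>R v k) = s k * norm (v k)" using sk by simp
    also have "\<dots> \<le> s k * B" using elim sk by (intro mult_left_mono) auto
    also have "\<dots> < \<delta>" using elim B by (simp add: pos_less_divide_eq)
    finally have hn: "norm (s k *\<^sub>R v k) < \<delta>" .
    have "(norm (s k *\<^sub>R v k))^2 = (s k)^2 * (norm (v k))^2" using sk by (simp add: power_mult_distrib)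
    also have "\<dots> \<le> (s k)^2 * B^2"
      using elim by (intro mult_left_mono power_mono) auto
    finally have hn2: "(norm (s k *\<^sub>R v k))^2 \<le> (s k)^2 * B^2" .
    let ?R = "f (x + s k *\<^sub>R v k) - f x - Df x (s k *\<^sub>R v k) - D2f x (s k *\<^sub>R v k) (s k *\<^sub>R v k) / 2"
    have "\<bar>?R\<bar> \<le> e / (2 * B^2) * (norm (s k *\<^sub>R v k))^2" using d(2)[OF hn] .
    also have "\<dots> \<le> e / (2 * B^2) * ((s k)^2 * B^2)"
      using hn2 e2 by (intro mult_left_mono) auto
    also have "\<dots> = e / 2 * (s k)^2" using B by (simp add: field_simps)
    finally have "\<bar>?R\<bar> \<le> e / 2 * (s k)^2" .
    then have "\<bar>?R\<bar> / (s k)^2 \<le> e / 2" using sk by (simp add: divide_le_eq)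
    moreover have "dist (?R / (s k)^2) 0 = \<bar>?R\<bar> / (s k)^2" by (simp add: dist_norm abs_divide)
    ultimately show ?case using e by linarith
  qed
qed

lemma dir_ev:
  fixes d :: "'a::real_normed_vector"
  assumes rho: "\<rho> > 0" and del: "\<delta> > 0" and spos: "\<And>k. s k > 0" and s0: "s \<longlonglongrightarrow> 0"
    and vlim: "v \<longlonglongrightarrow> d"
  shows "eventually (\<lambda>k. s k *\<^sub>R v k \<in> dir_nbhd \<rho> \<delta> d) sequentially"
proof -
  have "(\<lambda>k. s k *\<^sub>R v k) \<longlonglongrightarrow> 0 *\<^sub>R d" by (intro tendsto_intros s0 vlim)
  then have "(\<lambda>k. norm (s k *\<^sub>R v k)) \<longlonglongrightarrow> 0" using tendsto_norm by fastforce
  then have ev1: "eventually (\<lambda>k. norm (s k *\<^sub>R v k) < \<delta>) sequentially"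
    using del by (rule order_tendstoD)
  have ev2: "eventually (\<lambda>k. norm (norm d *\<^sub>R v k - norm (v k) *\<^sub>R d) \<le> \<rho> * norm (v k) * norm d) sequentially"
  proof (cases "d = 0")
    case True then show ?thesis by simp
  next
    case False
    have "(\<lambda>k. \<rho> * norm (v k) * norm d - norm (norm d *\<^sub>R v k - norm (v k) *\<^sub>R d))
       \<longlonglongrightarrow> \<rho> * norm d * norm d - norm (norm d *\<^sub>R d - norm d *\<^sub>R d)"
      by (intro tendsto_intros vlim)
    moreover have "\<rho> * norm d * norm d - norm (norm d *\<^sub>R d - norm d *\<^sub>R d) > 0"
      using False rho by simp
    ultimately have "eventually (\<lambda>k. \<rho> * norm (v k) * norm d - norm (norm d *\<^sub>R v k - norm (v k) *\<^sub>R d) > 0) sequentially"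
      by (rule order_tendstoD)
    then show ?thesis by eventually_elim simp
  qed
  show ?thesis using ev1 ev2
  proof eventually_elim
    case (elim k)
    have sk: "s k > 0" by (rule spos)
    have "norm (norm d *\<^sub>R (s k *\<^sub>R v k) - norm (s k *\<^sub>R v k) *\<^sub>R d) = s k * norm (norm d *\<^sub>R v k - norm (v k) *\<^sub>R d)"
    proof -
      have "norm d *\<^sub>R (s k *\<^sub>R v k) - norm (s k *\<^sub>R v k) *\<^sub>R d = s k *\<^sub>R (norm d *\<^sub>R v k - norm (v k) *\<^sub>R d)"
        using sk by (simp add: scaleR_diff_right)
      then show ?thesis using sk by simp
    qed
    also have "\<dots> \<le> s k * (\<rho> * norm (v k) * norm d)" using elim sk by (intro mult_left_mono) auto
    also have "\<dots> = \<rho> * norm (s k *\<^sub>R v k) * norm d" using sk by simp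
    finally show ?case using elim unfolding dir_nbhd_def by simp
  qed
qed

lemma second_nonneg:
  fixes f :: "'a::real_normed_vector \<Rightarrow> real"
  assumes f_D: "\<And>x. (f has_derivative blinfun_apply (Df x)) (at x)"
    and f_D2: "\<And>x. (Df has_derivative blinfun_apply (D2f x)) (at x)"
    and cont: "isCont D2f x"
    and loc: "local_opt_in_dir f C x d" and crit: "Df x d = 0"
    and w: "w \<in> second_tangent_set C x d"
  shows "Df x w + D2f x d d \<ge> 0"
proof -
  obtain \<rho> \<delta> where rd: "\<rho> > 0" "\<delta> > 0" "\<And>y. y \<in> C \<inter> ((\<lambda>w. x + w) ` dir_nbhd \<rho> \<delta> d) \<Longrightarrow> f y \<ge> f x"
    using loc unfolding local_opt_in_dir_def by blast
  obtain t :: "nat \<Rightarrow> real" and wk where tw: "\<And>k. t k > 0" "t \<longlonglongrightarrow> 0" "wk \<longlonglongrightarrow> w"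
    "\<And>k. x + t k *\<^sub>R d + ((1/2) * (t k)^2) *\<^sub>R wk k \<in> C"
    using w unfolding second_tangent_set_def by blast
  define v where "v = (\<lambda>k. d + (t k / 2) *\<^sub>R wk k)"
  have vl: "v \<longlonglongrightarrow> d + (0 / 2) *\<^sub>R w" unfolding v_def by (intro tendsto_intros tw) auto
  then have vl: "v \<longlonglongrightarrow> d" by simp
  have hx: "x + t k *\<^sub>R v k = x + t k *\<^sub>R d + ((1/2) * (t k)^2) *\<^sub>R wk k" for k
    by (simp add: v_def scaleR_add_right power2_eq_square)
  define R where "R = (\<lambda>k. (f (x + t k *\<^sub>R v k) - f x - Df x (t k *\<^sub>R v k)
            - D2f x (t k *\<^sub>R v k) (t k *\<^sub>R v k) / 2) / (t k)^2)"
  have R0: "R \<longlonglongrightarrow> 0" unfolding R_def by (rule rem_seq[OF f_D f_D2 cont tw(1,2) vl])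
  define q where "q = (\<lambda>k. Df x (wk k) / 2 + D2f x (v k) (v k) / 2 + R k)"
  have ql: "q \<longlonglongrightarrow> Df x w / 2 + D2f x d d / 2 + 0"
    unfolding q_def by (intro tendsto_intros tw vl R0) auto
  have qid: "q k = (f (x + t k *\<^sub>R v k) - f x) / (t k)^2" for k
  proof -
    have tk: "t k \<noteq> 0" using tw(1)[of k] by simp
    have "Df x (t k *\<^sub>R v k) = (t k)^2 / 2 * Df x (wk k)"
      by (simp add: v_def blinfun.scaleR_right blinfun.add_right crit power2_eq_square)
    moreover have "D2f x (t k *\<^sub>R v k) (t k *\<^sub>R v k) = (t k)^2 * D2f x (v k) (v k)"
      by (simp add: blinfun.scaleR_right blinfun.scaleR_left power2_eq_square)
    ultimately show ?thesis using tk unfolding q_def R_def by (simp add: field_simps)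
  qed
  have "eventually (\<lambda>k. t k *\<^sub>R v k \<in> dir_nbhd \<rho> \<delta> d) sequentially"
    by (rule dir_ev[OF rd(1,2) tw(1,2) vl])
  then have "eventually (\<lambda>k. 0 \<le> q k) sequentially"
  proof eventually_elim
    case (elim k)
    have "x + t k *\<^sub>R v k \<in> C \<inter> ((\<lambda>w. x + w) ` dir_nbhd \<rho> \<delta> d)"
      using elim tw(4)[of k] hx[of k] by (auto simp: add.assoc)
    then have "f (x + t k *\<^sub>R v k) \<ge> f x" by (rule rd(3))
    then show ?case by (simp add: qid)
  qed
  then have "0 \<le> Df x w / 2 + D2f x d d / 2 + 0"
    using ql by (intro tendsto_lowerbound) auto
  then show ?thesis by simp
qed

lemma asym_nonneg:
  fixes f :: "'a::real_normed_vector \<Rightarrow> real"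
  assumes f_D: "\<And>x. (f has_derivative blinfun_apply (Df x)) (at x)"
    and f_D2: "\<And>x. (Df has_derivative blinfun_apply (D2f x)) (at x)"
    and cont: "isCont D2f x"
    and loc: "local_opt_in_dir f C x d" and crit: "Df x d = 0"
    and w: "w \<in> asymptotic_second_tangent_cone C x d"
  shows "Df x w \<ge> 0"
proof -
  obtain \<rho> \<delta> where rd: "\<rho> > 0" "\<delta> > 0" "\<And>y. y \<in> C \<inter> ((\<lambda>w. x + w) ` dir_nbhd \<rho> \<delta> d) \<Longrightarrow> f y \<ge> f x"
    using loc unfolding local_opt_in_dir_def by blast
  obtain t r :: "nat \<Rightarrow> real" and wk where tw: "\<And>k. t k > 0 \<and> r k > 0" "t \<longlonglongrightarrow> 0" "r \<longlonglongrightarrow> 0"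
    "(\<lambda>k. t k / r k) \<longlonglongrightarrow> 0" "wk \<longlonglongrightarrow> w"
    "\<And>k. x + t k *\<^sub>R d + ((1/2) * t k * r k) *\<^sub>R wk k \<in> C"
    using w unfolding asymptotic_second_tangent_cone_def by blast
  have tpos: "\<And>k. t k > 0" and rpos: "\<And>k. r k > 0" using tw(1) by auto
  define v where "v = (\<lambda>k. d + (r k / 2) *\<^sub>R wk k)"
  have vl: "v \<longlonglongrightarrow> d + (0 / 2) *\<^sub>R w" unfolding v_def by (intro tendsto_intros tw) auto
  then have vl: "v \<longlonglongrightarrow> d" by simp
  have hx: "x + t k *\<^sub>R v k = x + t k *\<^sub>R d + ((1/2) * t k * r k) *\<^sub>R wk k" for k
    by (simp add: v_def scaleR_add_right)
  define R where "R = (\<lambda>k. (f (x + t k *\<^sub>R v k) - f x - Df x (t k *\<^sub>R v k)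
            - D2f x (t k *\<^sub>R v k) (t k *\<^sub>R v k) / 2) / (t k)^2)"
  have R0: "R \<longlonglongrightarrow> 0" unfolding R_def by (rule rem_seq[OF f_D f_D2 cont tpos tw(2) vl])
  define q where "q = (\<lambda>k. Df x (wk k) / 2 + (t k / r k) * (D2f x (v k) (v k) / 2 + R k))"
  have ql: "q \<longlonglongrightarrow> Df x w / 2 + 0 * (D2f x d d / 2 + 0)"
    unfolding q_def by (intro tendsto_intros tw vl R0) auto
  have qid: "q k = (f (x + t k *\<^sub>R v k) - f x) / (t k * r k)" for k
  proof -
    have tk: "t k \<noteq> 0" "r k \<noteq> 0" using tw(1)[of k] by auto
    have "Df x (t k *\<^sub>R v k) = t k * r k / 2 * Df x (wk k)"
      by (simp add: v_def blinfun.scaleR_right blinfun.add_right crit)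
    moreover have "D2f x (t k *\<^sub>R v k) (t k *\<^sub>R v k) = (t k)^2 * D2f x (v k) (v k)"
      by (simp add: blinfun.scaleR_right blinfun.scaleR_left power2_eq_square)
    ultimately show ?thesis using tk unfolding q_def R_def by (simp add: field_simps power2_eq_square)
  qed
  have "eventually (\<lambda>k. t k *\<^sub>R v k \<in> dir_nbhd \<rho> \<delta> d) sequentially"
    by (rule dir_ev[OF rd(1,2) tpos tw(2) vl])
  then have "eventually (\<lambda>k. 0 \<le> q k) sequentially"
  proof eventually_elim
    case (elim k)
    have "x + t k *\<^sub>R v k \<in> C \<inter> ((\<lambda>w. x + w) ` dir_nbhd \<rho> \<delta> d)"
      using elim tw(6)[of k] hx[of k] by (auto simp: add.assoc)
    then have "f (x + t k *\<^sub>R v k) \<ge> f x" by (rule rd(3))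
    moreover have "t k * r k > 0" using tpos[of k] rpos[of k] by simp
    ultimately show ?case by (simp add: qid)
  qed
  then have "0 \<le> Df x w / 2 + 0 * (D2f x d d / 2 + 0)"
    using ql by (intro tendsto_lowerbound) auto
  then show ?thesis by simp
qed

theorem theorem4p2:
  fixes f :: "'a::euclidean_space \<Rightarrow> real"
    and Df :: "'a \<Rightarrow> ('a \<Rightarrow>\<^sub>L real)"
    and D2f :: "'a \<Rightarrow> ('a \<Rightarrow>\<^sub>L ('a \<Rightarrow>\<^sub>L real))"
    and g :: "'a \<Rightarrow> 'b::euclidean_space"
    and Dg :: "'a \<Rightarrow> ('a \<Rightarrow>\<^sub>L 'b)"
    and D2g :: "'a \<Rightarrow> ('a \<Rightarrow>\<^sub>L ('a \<Rightarrow>\<^sub>L 'b))"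
    and K :: "'b set" and xbar d :: 'a
  assumes f_D: "\<And>x. (f has_derivative blinfun_apply (Df x)) (at x)"
    and f_D2: "\<And>x. (Df has_derivative blinfun_apply (D2f x)) (at x)"
    and f_cont: "continuous_on UNIV D2f"
    and g_D: "\<And>x. (g has_derivative blinfun_apply (Dg x)) (at x)"
    and g_D2: "\<And>x. (Dg has_derivative blinfun_apply (D2g x)) (at x)"
    and g_cont: "continuous_on UNIV D2g"
    and K_closed: "closed K"
    and d_tan: "d \<in> tangent_cone (g -` K) xbar"
    and loc: "local_opt_in_dir f (g -` K) xbar d"
    and crit: "Df xbar d = 0"
  shows "\<forall>lam::'b. (\<forall>v. Df xbar v + lam \<bullet> Dg xbar v = 0) \<longrightarrow>
     support_fun (blinfun_apply (Dg xbar) ` asymptotic_second_tangent_cone (g -` K) xbar d) lam \<le> 0 \<and>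
     (let \<alpha> = (INF w\<in>second_tangent_set (g -` K) xbar d. ereal (Df xbar w + D2f xbar d d))
      in ereal (D2f xbar d d + lam \<bullet> D2g xbar d d)
           - support_fun ((\<lambda>w. Dg xbar w + D2g xbar d d) ` second_tangent_set (g -` K) xbar d) lam = \<alpha>
         \<and> \<alpha> \<ge> 0)"
proof (intro allI impI)
  fix lam :: 'b
  assume hl: "\<forall>v. Df xbar v + lam \<bullet> Dg xbar v = 0"
  have ld: "lam \<bullet> Dg xbar v = - Df xbar v" for v using hl[rule_format, of v] by linarith
  have cont: "isCont D2f xbar" using f_cont by (simp add: continuous_on_eq_continuous_at)
  have part1: "support_fun (blinfun_apply (Dg xbar) ` asymptotic_second_tangent_cone (g -` K) xbar d) lam \<le> 0"
    unfolding support_fun_def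
  proof (rule SUP_least)
    fix u assume "u \<in> blinfun_apply (Dg xbar) ` asymptotic_second_tangent_cone (g -` K) xbar d"
    then obtain w where w: "w \<in> asymptotic_second_tangent_cone (g -` K) xbar d" "u = Dg xbar w" by blast
    have "Df xbar w \<ge> 0" by (rule asym_nonneg[OF f_D f_D2 cont loc crit w(1)])
    then show "ereal (lam \<bullet> u) \<le> 0" using w(2) ld by simp
  qed
  define S where "S = second_tangent_set (g -` K) xbar d"
  define b where "b = D2f xbar d d"
  define c where "c = lam \<bullet> D2g xbar d d"
  define \<alpha> where "\<alpha> = (INF w\<in>S. ereal (Df xbar w + b))"
  have sup: "support_fun ((\<lambda>w. Dg xbar w + D2g xbar d d) ` S) lam = (SUP w\<in>S. ereal (c - Df xbar w))"
    unfolding support_fun_def by (simp add: image_comp o_def inner_add_right ld c_def)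
  have anon: "\<alpha> \<ge> 0" unfolding \<alpha>_def
  proof (rule INF_greatest)
    fix w assume "w \<in> S"
    then show "0 \<le> ereal (Df xbar w + b)"
      using second_nonneg[OF f_D f_D2 cont loc crit] unfolding S_def b_def by simp
  qed
  have eq: "ereal (b + c) - (SUP w\<in>S. ereal (c - Df xbar w)) = \<alpha>"
  proof (cases "S = {}")
    case True then show ?thesis by (simp add: \<alpha>_def bot_ereal_def top_ereal_def)
  next
    case False
    then obtain w0 where w0: "w0 \<in> S" by blast
    have "\<alpha> \<le> ereal (Df xbar w0 + b)" unfolding \<alpha>_def using w0 by (rule INF_lower)
    with anon obtain a where a: "\<alpha> = ereal a" by (cases \<alpha>) auto
    have "(SUP w\<in>S. ereal (c - Df xbar w)) = (SUP w\<in>S. ereal (b + c) - ereal (Df xbar w + b))"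
      by (simp add: algebra_simps)
    also have "\<dots> = ereal (b + c) - \<alpha>"
      unfolding \<alpha>_def by (rule SUP_ereal_minus_right[OF False]) simp
    finally show ?thesis using a by simp
  qed
  show "support_fun (blinfun_apply (Dg xbar) ` asymptotic_second_tangent_cone (g -` K) xbar d) lam \<le> 0 \<and>
     (let \<alpha> = (INF w\<in>second_tangent_set (g -` K) xbar d. ereal (Df xbar w + D2f xbar d d))
      in ereal (D2f xbar d d + lam \<bullet> D2g xbar d d)
           - support_fun ((\<lambda>w. Dg xbar w + D2g xbar d d) ` second_tangent_set (g -` K) xbar d) lam = \<alpha>
         \<and> \<alpha> \<ge> 0)"
    using part1 eq anon sup unfolding Let_def \<alpha>_def S_def b_def c_def by simp
qed

end
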